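(* Let $\mathcal X$ be a curve of genus $g$ over $\mathbf F_q$. Let $i\in\mathbf N'$, let $N$ be an integer with $-1\le N\le 2g-2$, and let $r\ge1$ be an integer with $i+r\le N+1$. Suppose $i+1,\dots,i+r$ are all gaps of $\mathcal X$, and set $A=\{i,i+1,\dots,i+r\}$. Then $$\min\{\tilde\ell(a)+\tilde\ell(N-a):a\in A\}=\tilde\ell(i+r)+\tilde\ell(N-i-r).$$
   Context: Here $\mathcal X$ is projective, geometrically irreducible and nonsingular. $\ell(A)=\dim_{\mathbf F_q}\mathcal L(A)$. For $j\ge1$, $\gamma_j=\min\{\deg A: A\ \mathbf F_q\text{-rational divisor},\ \ell(A)\ge j\}$, and $GS(\mathcal X)=\{\gamma_j:j\ge1\}$. Let $\mathbf N'=\{-1,0,1,2,\dots\}$; a gap of $\mathcal X$ is an element of $\mathbf N'\setminus GS(\mathcal X)$. Define $\tilde\ell:\mathbf N'\to\mathbf N_0$ by $\tilde\ell(-1)=0$ and $\tilde\ell(a)=\max\{j\ge1:\gamma_j\le a\}$ for $a\ge0$. *)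

theory Defs
  imports Main
begin

text \<open>Abstract gonality sequence: gamma j for j >= 1 (value at 0 is irrelevant).\<close>
definition gonality_seq :: "(nat \<Rightarrow> int) \<Rightarrow> bool" where
  "gonality_seq \<gamma> \<longleftrightarrow>
     (\<forall>j k. 1 \<le> j \<longrightarrow> j \<le> k \<longrightarrow> \<gamma> j \<le> \<gamma> k) \<and> \<gamma> 1 = 0 \<and>
     (\<forall>a. finite {j. 1 \<le> j \<and> \<gamma> j \<le> a})"

definition GS :: "(nat \<Rightarrow> int) \<Rightarrow> int set" where
  "GS \<gamma> = \<gamma> ` {j. 1 \<le> j}"

definition is_gap :: "(nat \<Rightarrow> int) \<Rightarrow> int \<Rightarrow> bool" where
  "is_gap \<gamma> a \<longleftrightarrow> -1 \<le> a \<and> a \<notin> GS \<gamma>"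

definition ltilde :: "(nat \<Rightarrow> int) \<Rightarrow> int \<Rightarrow> nat" where
  "ltilde \<gamma> a = (if a < 0 then 0 else (GREATEST j. 1 \<le> j \<and> \<gamma> j \<le> a))"

end

theory Submission
  imports Defs
begin

lemma lt_mono:
  assumes gs: "gonality_seq \<gamma>" and ab: "a \<le> b"
  shows "ltilde \<gamma> a \<le> ltilde \<gamma> b"
proof (cases "a < 0")
  case True then show ?thesis by (simp add: ltilde_def)
next
  case False
  have fin: "finite {j. 1 \<le> j \<and> \<gamma> j \<le> b}" using gs by (simp add: gonality_seq_def)
  then obtain M where M: "\<forall>j\<in>{j. 1 \<le> j \<and> \<gamma> j \<le> b}. j \<le> M"
    using finite_nat_set_iff_bounded_le by blast
  have g1: "\<gamma> 1 = 0" using gs by (simp add: gonality_seq_def)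
  have Pa: "1 \<le> (1::nat) \<and> \<gamma> 1 \<le> a" using False g1 by simp
  have ex: "\<exists>k. 1 \<le> k \<and> \<gamma> k \<le> a" using Pa by blast
  have Ga: "1 \<le> (GREATEST j. 1 \<le> j \<and> \<gamma> j \<le> a) \<and> \<gamma> (GREATEST j. 1 \<le> j \<and> \<gamma> j \<le> a) \<le> a"
    by (rule GreatestI_nat[where P="\<lambda>j. 1 \<le> j \<and> \<gamma> j \<le> a" and k=1 and b=M]) (use Pa M ab in auto)
  have "(GREATEST j. 1 \<le> j \<and> \<gamma> j \<le> a) \<le> (GREATEST j. 1 \<le> j \<and> \<gamma> j \<le> b)"
    by (rule Greatest_le_nat[where P="\<lambda>j. 1 \<le> j \<and> \<gamma> j \<le> b" and b=M]) (use Ga M ab in auto)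
  then show ?thesis using False ab by (simp add: ltilde_def)
qed

lemma lt_gap:
  assumes gs: "gonality_seq \<gamma>" and gap: "is_gap \<gamma> a"
  shows "ltilde \<gamma> a = ltilde \<gamma> (a - 1)"
proof -
  have g1: "\<gamma> 1 = 0" using gs by (simp add: gonality_seq_def)
  have ne: "a \<noteq> 0" using gap g1 by (auto simp: is_gap_def GS_def)
  have nv: "\<And>j. 1 \<le> j \<Longrightarrow> \<gamma> j \<noteq> a" using gap by (auto simp: is_gap_def GS_def)
  have "(\<lambda>j. 1 \<le> j \<and> \<gamma> j \<le> a) = (\<lambda>j. 1 \<le> j \<and> \<gamma> j \<le> a - 1)"
  proof (rule ext)
    fix j show "(1 \<le> j \<and> \<gamma> j \<le> a) = (1 \<le> j \<and> \<gamma> j \<le> a - 1)"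
      using nv[of j] by auto
  qed
  then show ?thesis using ne gap by (auto simp: ltilde_def is_gap_def)
qed

theorem lemma3p7:
  fixes \<gamma> :: "nat \<Rightarrow> int" and g :: nat and i N r :: int
  assumes "gonality_seq \<gamma>"
    and "-1 \<le> i"
    and "-1 \<le> N" and "N \<le> 2 * int g - 2"
    and "1 \<le> r" and "i + r \<le> N + 1"
    and "\<forall>k\<in>{1..r}. is_gap \<gamma> (i + k)"
  shows "Min ((\<lambda>a. ltilde \<gamma> a + ltilde \<gamma> (N - a)) ` {i..i + r})
           = ltilde \<gamma> (i + r) + ltilde \<gamma> (N - i - r)"
proof -
  have c: "\<forall>n::nat. int n \<le> r \<longrightarrow> ltilde \<gamma> (i + int n) = ltilde \<gamma> i"
  proof
    fix n :: nat
    show "int n \<le> r \<longrightarrow> ltilde \<gamma> (i + int n) = ltilde \<gamma> i"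
    proof (induction n)
      case 0 then show ?case by simp
    next
      case (Suc n)
      show ?case
      proof
        assume h: "int (Suc n) \<le> r"
        have "is_gap \<gamma> (i + int (Suc n))" using bspec[OF assms(7), of "int (Suc n)"] h by simp
        then have "ltilde \<gamma> (i + int (Suc n)) = ltilde \<gamma> (i + int (Suc n) - 1)"
          using lt_gap assms(1) by blast
        also have "i + int (Suc n) - 1 = i + int n" by simp
        also have "ltilde \<gamma> (i + int n) = ltilde \<gamma> i"
          using Suc.IH h by simp
        finally show "ltilde \<gamma> (i + int (Suc n)) = ltilde \<gamma> i" .
      qed
    qed
  qed
  have c2: "\<And>a. a \<in> {i..i+r} \<Longrightarrow> ltilde \<gamma> a = ltilde \<gamma> i"
  proof -
    fix a assume "a \<in> {i..i+r}"
    then have "a = i + int (nat (a - i))" "int (nat (a - i)) \<le> r" by auto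
    then show "ltilde \<gamma> a = ltilde \<gamma> i" using c[rule_format, of "nat (a - i)"] by simp
  qed
  show ?thesis
  proof (rule Min_eqI)
    show "finite ((\<lambda>a. ltilde \<gamma> a + ltilde \<gamma> (N - a)) ` {i..i + r})" by simp
  next
    fix y assume "y \<in> (\<lambda>a. ltilde \<gamma> a + ltilde \<gamma> (N - a)) ` {i..i + r}"
    then obtain a where a: "a \<in> {i..i+r}" and y: "y = ltilde \<gamma> a + ltilde \<gamma> (N - a)" by auto
    have "ltilde \<gamma> (N - i - r) \<le> ltilde \<gamma> (N - a)" using a by (intro lt_mono[OF assms(1)]) simp
    moreover have "ltilde \<gamma> a = ltilde \<gamma> (i + r)" using c2[OF a] c2[of "i+r"] assms(5) by simp
    ultimately show "ltilde \<gamma> (i + r) + ltilde \<gamma> (N - i - r) \<le> y" using y by simp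
  next
    show "ltilde \<gamma> (i + r) + ltilde \<gamma> (N - i - r) \<in> (\<lambda>a. ltilde \<gamma> a + ltilde \<gamma> (N - a)) ` {i..i + r}"
    proof (rule image_eqI[where x="i+r"])
      show "i + r \<in> {i..i+r}" using assms(5) by simp
      show "ltilde \<gamma> (i + r) + ltilde \<gamma> (N - i - r) = ltilde \<gamma> (i + r) + ltilde \<gamma> (N - (i + r))"
        by (simp add: diff_diff_eq)
    qed
  qed
qed

end
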